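(* Let $n,m,c$ be positive integers and $r,s,R,S$ nonnegative integers with $R\le n$, $S\le m$. Let $\alpha\in\mathrm{Par}(R,r)$, $\beta\in\mathrm{Par}(S,s)$, $\lambda\in\mathrm{Par}(n-R,c)$ and $\mu\in\mathrm{Par}(m-S,c)$. Then \[ X(q) = \frac{[(n-R)(m-S)]_q}{[c]_q} \begin{bmatrix}n\\ r\end{bmatrix}_q\begin{bmatrix}m\\ s\end{bmatrix}_q \begin{bmatrix}r\\ \alpha\end{bmatrix}_q \begin{bmatrix}s\\ \beta\end{bmatrix}_q \begin{bmatrix}c\\ \lambda\end{bmatrix}_q \begin{bmatrix}c\\ \mu\end{bmatrix}_q \] is a polynomial in $q$.
   Context: $\mathrm{Par}(N,k)$ is the set of integer partitions of $N$ with $k$ parts. Write $\lambda=(1^{m_1},2^{m_2},\dots)$ if $\lambda$ has $m_i$ parts equal to $i$. The $q$-notation is $[N]_q=(1-q^N)/(1-q)$, $[N]_q!=[1]_q\cdots[N]_q$, $\begin{bmatrix}N\\k\end{bmatrix}_q=\frac{[N]_q!}{[k]_q![N-k]_q!}$, and, for $\lambda$ with $k$ parts, $\begin{bmatrix}k\\ \lambda\end{bmatrix}_q=\frac{[k]_q!}{[m_1]_q![m_2]_q!\cdots}$. *)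

theory Defs
  imports Complex_Main "HOL-Library.Multiset" "HOL-Computational_Algebra.Polynomial"
begin

text \<open>Integer partitions of N with k parts, as multisets of positive integers.
  The multiplicity m_i of the part i is count lam i.\<close>
definition Par :: "nat \<Rightarrow> nat \<Rightarrow> nat multiset set" where
  "Par N k = {lam. size lam = k \<and> (\<forall>x\<in>#lam. 0 < x) \<and> sum_mset lam = N}"

definition qint :: "nat \<Rightarrow> complex \<Rightarrow> complex" where
  "qint N q = (1 - q ^ N) / (1 - q)"

definition qfact :: "nat \<Rightarrow> complex \<Rightarrow> complex" where
  "qfact N q = (\<Prod>i=1..N. qint i q)"

definition qbinom :: "nat \<Rightarrow> nat \<Rightarrow> complex \<Rightarrow> complex" where
  "qbinom N k q = qfact N q / (qfact k q * qfact (N - k) q)"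

definition qmultinom :: "nat \<Rightarrow> nat multiset \<Rightarrow> complex \<Rightarrow> complex" where
  "qmultinom k lam q = qfact k q / (\<Prod>i\<in>set_mset lam. qfact (count lam i) q)"

end

theory Submission
  imports Defs
begin

abbreviation PV :: "int poly \<Rightarrow> complex \<Rightarrow> complex" where
  "PV p x \<equiv> poly (map_poly of_int p) x"

lemma PV_add: "map_poly (of_int::int\<Rightarrow>complex) (p + q) = map_poly of_int p + map_poly of_int q"
  by (intro poly_eqI) (simp add: coeff_map_poly)

lemma PV_mult: "PV (p * q) x = PV p x * PV q x"
proof (induction p rule: pCons_induct)
  case 0 then show ?case by simp
next
  case (pCons a p)
  have "PV (pCons a p * q) x = PV (smult a q) x + PV (pCons 0 (p * q)) x"
    by (simp add: PV_add)
  also have "PV (smult a q) x = of_int a * PV q x"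
    by (simp add: map_poly_smult)
  also have "PV (pCons 0 (p * q)) x = x * (PV p x * PV q x)"
    by (simp add: map_poly_pCons pCons.IH)
  finally show ?case by (simp add: map_poly_pCons algebra_simps)
qed

definition nr :: "complex \<Rightarrow> bool" where "nr q \<longleftrightarrow> (\<forall>k>0. q ^ k \<noteq> 1)"

definition ispoly :: "(complex \<Rightarrow> complex) \<Rightarrow> bool" where
  "ispoly f \<longleftrightarrow> (\<exists>p :: int poly. \<forall>q. nr q \<longrightarrow> f q = PV p q)"

lemma ispoly_cong: "ispoly f \<Longrightarrow> (\<And>q. nr q \<Longrightarrow> f q = g q) \<Longrightarrow> ispoly g"
  unfolding ispoly_def by metis

lemma ispoly_add: "ispoly f \<Longrightarrow> ispoly g \<Longrightarrow> ispoly (\<lambda>q. f q + g q)"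
  unfolding ispoly_def
proof (elim exE)
  fix p1 p2 assume "\<forall>q. nr q \<longrightarrow> f q = PV p1 q" "\<forall>q. nr q \<longrightarrow> g q = PV p2 q"
  then show "\<exists>p. \<forall>q. nr q \<longrightarrow> f q + g q = PV p q"
    by (intro exI[of _ "p1 + p2"]) (simp add: PV_add)
qed

lemma ispoly_mult: "ispoly f \<Longrightarrow> ispoly g \<Longrightarrow> ispoly (\<lambda>q. f q * g q)"
  unfolding ispoly_def
proof (elim exE)
  fix p1 p2 assume "\<forall>q. nr q \<longrightarrow> f q = PV p1 q" "\<forall>q. nr q \<longrightarrow> g q = PV p2 q"
  then show "\<exists>p. \<forall>q. nr q \<longrightarrow> f q * g q = PV p q"
    by (intro exI[of _ "p1 * p2"]) (simp add: PV_mult)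
qed

lemma ispoly_0: "ispoly (\<lambda>q. 0)"
  unfolding ispoly_def by (intro exI[of _ 0]) simp

lemma ispoly_1: "ispoly (\<lambda>q. 1)"
  unfolding ispoly_def by (intro exI[of _ 1]) simp

lemma ispoly_pow: "ispoly (\<lambda>q. q ^ j)"
  unfolding ispoly_def by (intro exI[of _ "monom 1 j"]) (simp add: map_poly_monom poly_monom)

lemma ispoly_sum:
  fixes n :: nat
  assumes that: "\<And>j. ispoly (f j)"
  shows "ispoly (\<lambda>q. \<Sum>j<n. f j q)"
proof (induction n)
  case 0 then show ?case by (simp add: ispoly_0)
next
  case (Suc n) then show ?case by (simp add: ispoly_add that)
qed

lemma nr_ne1: "nr q \<Longrightarrow> q \<noteq> 1"
  unfolding nr_def by (metis power_one_right zero_less_one)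

lemma qint_sum: "nr q \<Longrightarrow> qint n q = (\<Sum>j<n. q ^ j)"
  using nr_ne1[of q] by (simp add: qint_def sum_gp_strict)

lemma qint_nz: "nr q \<Longrightarrow> 0 < n \<Longrightarrow> qint n q \<noteq> 0"
  using nr_ne1[of q] by (simp add: qint_def nr_def)

lemma qfact_nz: "nr q \<Longrightarrow> qfact n q \<noteq> 0"
  unfolding qfact_def using qint_nz by (simp add: prod_zero_iff)

lemma qfact_0[simp]: "qfact 0 q = 1" by (simp add: qfact_def)

lemma qfact_Suc: "qfact (Suc n) q = qfact n q * qint (Suc n) q"
  by (simp add: qfact_def)

lemma qint_add: "nr q \<Longrightarrow> qint (a + b) q = qint a q + q ^ a * qint b q"
  using nr_ne1[of q] by (simp add: qint_def power_add field_simps)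

lemma qint_mult: "nr q \<Longrightarrow> qint (a * b) q = qint a q * (\<Sum>j<b. q ^ (a * j))"
proof (cases "a = 0")
  case True then show ?thesis by (simp add: qint_def)
next
  case False
  assume q: "nr q"
  then have "q ^ a \<noteq> 1" using False by (simp add: nr_def)
  then have "(\<Sum>j<b. q ^ (a * j)) = (1 - (q^a)^b) / (1 - q^a)"
    by (simp add: power_mult sum_gp_strict)
  then show ?thesis using nr_ne1[OF q] \<open>q ^ a \<noteq> 1\<close>
    by (simp add: qint_def power_mult field_simps)
qed

lemma ispoly_qint: "ispoly (qint n)"
  by (rule ispoly_cong[OF ispoly_sum[OF ispoly_pow]]) (simp add: qint_sum)

lemma ispoly_geo: "ispoly (\<lambda>q. \<Sum>j<b. q ^ (a * j))"
  by (rule ispoly_sum[OF ispoly_pow])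

lemma ispoly_qfact: "ispoly (qfact k)"
proof (induction k)
  case 0 then show ?case using ispoly_1 by (simp add: qfact_def[abs_def])
next
  case (Suc k)
  have "ispoly (\<lambda>q. qfact k q * qint (Suc k) q)"
    by (rule ispoly_mult[OF Suc.IH ispoly_qint])
  then show ?case by (simp add: qfact_Suc[abs_def])
qed

lemma ispoly_binom: "ispoly (\<lambda>q. qfact (a + b) q / (qfact a q * qfact b q))"
proof (induction a arbitrary: b)
  case 0
  show ?case by (rule ispoly_cong[OF ispoly_1]) (simp add: qfact_nz)
next
  case (Suc a)
  note IHa = Suc.IH
  show ?case
  proof (induction b)
    case 0
    show ?case by (rule ispoly_cong[OF ispoly_1]) (simp add: qfact_nz)
  next
    case (Suc b)
    have "ispoly (\<lambda>q. qfact (a + Suc b) q / (qfact a q * qfact (Suc b) q)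
       + q ^ Suc a * (qfact (Suc a + b) q / (qfact (Suc a) q * qfact b q)))"
      by (intro ispoly_add ispoly_mult ispoly_pow IHa Suc.IH)
    then show ?case
    proof (rule ispoly_cong)
      fix q assume q: "nr q"
      have nz: "qfact a q \<noteq> 0" "qfact b q \<noteq> 0" "qint (Suc a) q \<noteq> 0" "qint (Suc b) q \<noteq> 0"
        using q by (auto simp: qfact_nz qint_nz)
      have e: "qint (Suc (Suc (a + b))) q = qint (Suc a) q + q ^ Suc a * qint (Suc b) q"
        using qint_add[OF q, of "Suc a" "Suc b"] by simp
      have "qfact (Suc a + Suc b) q = qfact (Suc (a+b)) q * qint (Suc (Suc (a + b))) q"
        by (simp add: qfact_Suc)
      then show "qfact (a + Suc b) q / (qfact a q * qfact (Suc b) q)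
       + q ^ Suc a * (qfact (Suc a + b) q / (qfact (Suc a) q * qfact b q))
        = qfact (Suc a + Suc b) q / (qfact (Suc a) q * qfact (Suc b) q)"
        using nz unfolding e by (simp add: qfact_Suc field_simps)
    qed
  qed
qed

lemma ispoly_gen: "finite A \<Longrightarrow> sum f A \<le> k \<Longrightarrow>
   ispoly (\<lambda>q. qfact k q / (\<Prod>i\<in>A. qfact (f i) q))"
proof (induction A arbitrary: k rule: finite_induct)
  case empty
  show ?case by (simp add: ispoly_qfact)
next
  case (insert x A)
  have le: "sum f A \<le> k - f x" using insert by simp
  have "ispoly (\<lambda>q. qfact (f x + (k - f x)) q / (qfact (f x) q * qfact (k - f x) q)
     * (qfact (k - f x) q / (\<Prod>i\<in>A. qfact (f i) q)))"
    by (intro ispoly_mult ispoly_binom insert.IH le)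
  then show ?case
  proof (rule ispoly_cong)
    fix q assume q: "nr q"
    have "f x + (k - f x) = k" using insert by simp
    then show "qfact (f x + (k - f x)) q / (qfact (f x) q * qfact (k - f x) q)
     * (qfact (k - f x) q / (\<Prod>i\<in>A. qfact (f i) q)) =
      qfact k q / (\<Prod>i\<in>insert x A. qfact (f i) q)"
      using insert qfact_nz[OF q] by (simp add: field_simps)
  qed
qed

lemma ispoly_qbinom: "r \<le> n \<Longrightarrow> ispoly (qbinom n r)"
  using ispoly_binom[of r "n - r"] by (simp add: qbinom_def[abs_def])

lemma ispoly_qmultinom: "size lam \<le> k \<Longrightarrow> ispoly (qmultinom k lam)"
  unfolding qmultinom_def[abs_def]
  by (rule ispoly_gen) (auto simp: size_multiset_overloaded_eq)

lemma size_le_sum: "\<forall>x\<in>#M. 0 < x \<Longrightarrow> size M \<le> sum_mset (M :: nat multiset)"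
  by (induction M) auto

lemma sum_mset_count: "sum_mset (M::nat multiset) = (\<Sum>i\<in>set_mset M. i * count M i)"
proof (induction M)
  case empty then show ?case by simp
next
  case (add x M)
  let ?S = "insert x (set_mset M)"
  have "(\<Sum>i\<in>?S. i * count (add_mset x M) i) = (\<Sum>i\<in>?S. i * count M i + (if i = x then x else 0))"
    by (intro sum.cong) auto
  also have "\<dots> = (\<Sum>i\<in>?S. i * count M i) + x" by (simp add: sum.distrib)
  also have "(\<Sum>i\<in>?S. i * count M i) = (\<Sum>i\<in>set_mset M. i * count M i)"
    by (intro sum.mono_neutral_right) auto
  finally show ?case using add by simp
qed

lemma key:
  assumes "0 < c" "size lam = c"
  shows "ispoly (\<lambda>q. qint (sum_mset lam) q / qint c q * qmultinom c lam q)"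
proof -
  define J where "J a \<longleftrightarrow> ispoly (\<lambda>q. qint a q / qint c q * qmultinom c lam q)" for a
  define A where "A = set_mset lam"
  define C where "C = count lam"
  have finA: "finite A" by (simp add: A_def)
  have K1: "J (C i)" if iA: "i \<in> A" for i
  proof -
    define f where "f = C(i := C i - 1)"
    have Ci: "0 < C i" using iA by (simp add: A_def C_def)
    have "sum f A = sum C A - 1"
    proof -
      have "sum f A = f i + sum f (A - {i})" using finA iA by (simp add: sum.remove)
      moreover have "sum C A = C i + sum C (A - {i})" using finA iA by (simp add: sum.remove)
      moreover have "sum f (A - {i}) = sum C (A - {i})" by (intro sum.cong) (auto simp: f_def)
      ultimately show ?thesis using Ci by (simp add: f_def)
    qed
    also have "sum C A = c" using assms by (simp add: A_def C_def size_multiset_overloaded_eq)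
    finally have "sum f A \<le> c - 1" by simp
    then have "ispoly (\<lambda>q. qfact (c - 1) q / (\<Prod>j\<in>A. qfact (f j) q))"
      by (rule ispoly_gen[OF finA])
    then show ?thesis unfolding J_def
    proof (rule ispoly_cong)
      fix q assume q: "nr q"
      define pi where "pi = (\<Prod>j\<in>A - {i}. qfact (C j) q)"
      have pinz: "pi \<noteq> 0" using qfact_nz[OF q] finA by (simp add: pi_def)
      have p1: "(\<Prod>j\<in>A. qfact (C j) q) = qfact (C i) q * pi"
        using finA iA by (simp add: prod.remove pi_def)
      have "(\<Prod>j\<in>A. qfact (f j) q) = qfact (f i) q * (\<Prod>j\<in>A - {i}. qfact (f j) q)"
        using finA iA by (simp add: prod.remove)
      also have "(\<Prod>j\<in>A - {i}. qfact (f j) q) = pi"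
        unfolding pi_def by (intro prod.cong) (auto simp: f_def)
      finally have p2: "(\<Prod>j\<in>A. qfact (f j) q) = qfact (C i - 1) q * pi" by (simp add: f_def)
      have ec: "qfact c q = qfact (c - 1) q * qint c q"
        using qfact_Suc[of "c - 1" q] assms by simp
      have eci: "qfact (C i) q = qfact (C i - 1) q * qint (C i) q"
        using qfact_Suc[of "C i - 1" q] Ci by simp
      have nz: "qint c q \<noteq> 0" "qint (C i) q \<noteq> 0" "qfact (C i - 1) q \<noteq> 0" "qfact (c - 1) q \<noteq> 0"
        using qint_nz[OF q] qfact_nz[OF q] assms Ci by auto
      show "qfact (c - 1) q / (\<Prod>j\<in>A. qfact (f j) q) =
          qint (C i) q / qint c q * qmultinom c lam q"
        unfolding qmultinom_def A_def[symmetric] C_def[symmetric] p1 p2 ec eci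
        using nz pinz by (simp add: field_simps)
    qed
  qed
  have K2: "J (a + b)" if "J a" "J b" for a b
  proof -
    have "ispoly (\<lambda>q. qint a q / qint c q * qmultinom c lam q +
         q ^ a * (qint b q / qint c q * qmultinom c lam q))"
      using that unfolding J_def by (intro ispoly_add[OF _ ispoly_mult[OF ispoly_pow]])
    then show ?thesis unfolding J_def
      by (rule ispoly_cong) (simp add: qint_add algebra_simps add_divide_distrib)
  qed
  have K3: "J (a * b)" if "J a" for a b
  proof -
    have "ispoly (\<lambda>q. qint a q / qint c q * qmultinom c lam q * (\<Sum>j<b. q ^ (a * j)))"
      using that unfolding J_def by (intro ispoly_mult[OF _ ispoly_geo])
    then show ?thesis unfolding J_def
      by (rule ispoly_cong) (simp add: qint_mult)
  qed
  have K4: "J 0" unfolding J_def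
    by (rule ispoly_cong[OF ispoly_0]) (simp add: qint_def)
  have K5: "B \<subseteq> A \<Longrightarrow> J (\<Sum>i\<in>B. i * C i)" for B
  proof -
    assume BA: "B \<subseteq> A"
    have "finite B" using BA finA finite_subset by blast
    from this BA show ?thesis
    proof (induction B rule: finite_induct)
      case empty then show ?case by (simp add: K4)
    next
      case (insert x B)
      have "J (C x * x)" using insert K1 K3 by auto
      then have "J (x * C x)" by (simp add: mult.commute)
      then show ?case using insert K2 by simp
    qed
  qed
  have "sum_mset lam = (\<Sum>i\<in>A. i * C i)"
    unfolding A_def C_def by (rule sum_mset_count)
  then show ?thesis using K5[of A] J_def by simp
qed

theorem proposition2p8:
  fixes n m c r s R S :: nat and alpha beta lam mu :: "nat multiset"
  assumes "0 < n" "0 < m" "0 < c" "R \<le> n" "S \<le> m"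
    and "alpha \<in> Par R r" "beta \<in> Par S s" "lam \<in> Par (n - R) c" "mu \<in> Par (m - S) c"
  shows "\<exists>p :: int poly. \<forall>q :: complex. (\<forall>k>0. q ^ k \<noteq> 1) \<longrightarrow>
           qint ((n - R) * (m - S)) q / qint c q * qbinom n r q * qbinom m s q
           * qmultinom r alpha q * qmultinom s beta q * qmultinom c lam q * qmultinom c mu q
           = poly (map_poly of_int p) q"
proof -
  have a: "size alpha = r" "\<forall>x\<in>#alpha. 0 < x" "sum_mset alpha = R"
    using assms(6) by (auto simp: Par_def)
  have b: "size beta = s" "\<forall>x\<in>#beta. 0 < x" "sum_mset beta = S"
    using assms(7) by (auto simp: Par_def)
  have l: "size lam = c" "sum_mset lam = n - R" using assms(8) by (auto simp: Par_def)
  have u: "size mu = c" using assms(9) by (auto simp: Par_def)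
  have rn: "r \<le> n" using size_le_sum[OF a(2)] a assms(4) by simp
  have sm: "s \<le> m" using size_le_sum[OF b(2)] b assms(5) by simp
  have K: "ispoly (\<lambda>q. qint (n - R) q / qint c q * qmultinom c lam q)"
    using key[OF assms(3) l(1)] l(2) by simp
  have "ispoly (\<lambda>q. qint (n - R) q / qint c q * qmultinom c lam q * (\<Sum>j<m - S. q ^ ((n - R) * j))
      * qbinom n r q * qbinom m s q * qmultinom r alpha q * qmultinom s beta q * qmultinom c mu q)"
    by (intro ispoly_mult K ispoly_geo ispoly_qbinom rn sm ispoly_qmultinom) (simp_all add: a b u)
  then have "ispoly (\<lambda>q. qint ((n - R) * (m - S)) q / qint c q * qbinom n r q * qbinom m s q
           * qmultinom r alpha q * qmultinom s beta q * qmultinom c lam q * qmultinom c mu q)"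
    by (rule ispoly_cong) (simp add: qint_mult)
  then show ?thesis unfolding ispoly_def nr_def by blast
qed

end
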